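(* For $n$ large enough, every linear trifferent code of length $n$ has size at most $3^{n/4.55}$.
   Context: A linear trifferent code of length $n$ is a linear subspace $C\subseteq\mathbb{F}_3^n$ such that for any three distinct $x,y,z\in C$ there is a coordinate $i$ with $\{x_i,y_i,z_i\}=\mathbb{F}_3$. *)

theory Defs
  imports Complex_Main "HOL-Library.Numeral_Type"
begin

text \<open>The field F_3 is rendered as the type 3 from HOL-Library.Numeral_Type
(integers mod 3, a comm_ring_1 with exactly three elements 0, 1, 2).
A word of length n over F_3 is a function nat => 3 whose support lies in {0..<n};
F3_space n is thus a copy of F_3^n.\<close>

definition F3_space :: "nat \<Rightarrow> (nat \<Rightarrow> 3) set" where
  "F3_space n = {x. \<forall>i\<ge>n. x i = 0}"

definition linear_code :: "nat \<Rightarrow> (nat \<Rightarrow> 3) set \<Rightarrow> bool" where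
  "linear_code n C \<longleftrightarrow> C \<subseteq> F3_space n \<and> (\<lambda>_. 0) \<in> C \<and>
     (\<forall>x\<in>C. \<forall>y\<in>C. (\<lambda>i. x i + y i) \<in> C) \<and>
     (\<forall>c::3. \<forall>x\<in>C. (\<lambda>i. c * x i) \<in> C)"

definition trifferent :: "nat \<Rightarrow> (nat \<Rightarrow> 3) set \<Rightarrow> bool" where
  "trifferent n C \<longleftrightarrow> (\<forall>x\<in>C. \<forall>y\<in>C. \<forall>z\<in>C. x \<noteq> y \<and> y \<noteq> z \<and> x \<noteq> z \<longrightarrow>
     (\<exists>i<n. {x i, y i, z i} = (UNIV :: 3 set)))"

end

theory Submission
  imports Defs "HOL-Decision_Procs.Approximation_Bounds"
begin


lemma ex3: "(x::3) = 0 \<or> x = 1 \<or> x = 2"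
proof (cases x rule: bit1.cases)
  case (1 z)
  then have "z = 0 \<or> z = 1 \<or> z = 2" by auto
  then show ?thesis using 1 by auto
qed
lemma U3: "(UNIV::3 set) = {0,1,2}" using ex3 by auto
lemma all3: "(\<forall>x::3. P x) \<longleftrightarrow> P 0 \<and> P 1 \<and> P 2" using ex3 by metis
lemma sq3: "(x::3) \<noteq> 0 \<Longrightarrow> x * x = 1" using ex3[of x] by auto

lemma trip: "(t::3) + t + t = 0" using ex3[of t] by auto

definition lin :: "(nat \<Rightarrow> 3) set \<Rightarrow> bool" where
  "lin V \<longleftrightarrow> (\<lambda>_. 0) \<in> V \<and> (\<forall>x\<in>V. \<forall>y\<in>V. (\<lambda>i. x i + y i) \<in> V) \<and> (\<forall>c::3. \<forall>x\<in>V. (\<lambda>i. c * x i) \<in> V)"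


lemma sum3: "(\<Sum>t\<in>(UNIV::3 set). g t) = g 0 + g 1 + g 2"
  unfolding U3 by (simp add: add.assoc)
lemma sum_t_pow: "k \<le> 1 \<Longrightarrow> (\<Sum>t\<in>(UNIV::3 set). t ^ k) = 0"
proof -
  assume "k \<le> 1" then have "k = 0 \<or> k = 1" by auto
  then show ?thesis unfolding sum3 by auto
qed
lemma sum_prod_zero:
  fixes V :: "(nat \<Rightarrow> 3) set" and a :: "nat \<Rightarrow> 3"
  assumes "finite V" "lin V" "finite J" "3 ^ card J < card V ^ 2"
  shows "(\<Sum>v\<in>V. \<Prod>j\<in>J. v j - a j) = 0"
  using assms
proof (induction "card V" arbitrary: V J rule: less_induct)
  case less
  have lV: "(\<lambda>_. 0) \<in> V" "\<And>x y. x\<in>V \<Longrightarrow> y\<in>V \<Longrightarrow> (\<lambda>i. x i + y i) \<in> V"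
     "\<And>c x. x\<in>V \<Longrightarrow> (\<lambda>i. c * x i) \<in> V" using less.prems(2) unfolding lin_def by auto
  have "card V \<noteq> 1"
  proof
    assume "card V = 1" then show False using less.prems(4) by simp
  qed
  moreover have "card V \<noteq> 0" using lV(1) less.prems(1) by auto
  ultimately have "\<exists>v\<in>V. v \<noteq> (\<lambda>_. 0)"
  proof -
    assume a: "card V \<noteq> 1" "card V \<noteq> 0"
    show ?thesis
    proof (rule ccontr)
      assume "\<not> ?thesis"
      then have "V \<subseteq> {\<lambda>_. 0}" by auto
      then have "card V \<le> 1" using card_le_Suc0_iff_eq[OF less.prems(1)] by auto
      then show False using a by linarith
    qed
  qed
  then obtain v where v: "v \<in> V" "v \<noteq> (\<lambda>_. 0)" by blast
  then obtain i where i: "v i \<noteq> 0" by auto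
  define u where "u = (\<lambda>j. v i * v j)"
  have uV: "u \<in> V" unfolding u_def using lV(3) v(1) .
  have ui: "u i = 1" unfolding u_def using sq3[OF i] .
  define W where "W = {w\<in>V. w i = 0}"
  have finW: "finite W" using less.prems(1) unfolding W_def by auto
  have linW: "lin W" unfolding lin_def W_def using lV by auto
  define h where "h = (\<lambda>(t::3, w::nat\<Rightarrow>3). (\<lambda>j. w j + t * u j))"
  have bij: "bij_betw h (UNIV \<times> W) V"
  proof (rule bij_betw_imageI)
    show "inj_on h (UNIV \<times> W)"
    proof (rule inj_onI)
      fix p q assume p: "p \<in> UNIV \<times> W" and q: "q \<in> UNIV \<times> W" and e: "h p = h q"
      obtain t w where pt: "p = (t, w)" by (cases p)
      obtain t' w' where qt: "q = (t', w')" by (cases q)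
      have wi: "w i = 0" "w' i = 0" using p q pt qt W_def by auto
      have "h p i = h q i" using e by simp
      then have tt: "t = t'" using wi ui pt qt h_def by simp
      have "w = w'"
      proof
        fix j have "h p j = h q j" using e by simp
        then show "w j = w' j" using tt pt qt h_def by simp
      qed
      then show "p = q" using tt pt qt by simp
    qed
    show "h ` (UNIV \<times> W) = V"
    proof
      show "h ` (UNIV \<times> W) \<subseteq> V"
      proof
        fix x assume "x \<in> h ` (UNIV \<times> W)"
        then obtain t w where "w \<in> W" "x = h (t, w)" by auto
        then show "x \<in> V" using lV(2)[of w "\<lambda>j. t * u j"] lV(3)[OF uV, of t] W_def h_def by auto
      qed
      show "V \<subseteq> h ` (UNIV \<times> W)"
      proof
        fix x assume xV: "x \<in> V"
        define w where "w = (\<lambda>j. x j + (2 * x i) * u j)"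
        have wV: "w \<in> V" unfolding w_def using lV(2)[OF xV lV(3)[OF uV, of "2 * x i"]] .
        have "w i = 0" unfolding w_def ui using ex3[of "x i"] by auto
        then have "w \<in> W" using wV W_def by auto
        moreover have "h (x i, w) = x"
        proof -
          have e: "x j + 2 * x i * u j + x i * u j = x j" for j
          proof -
            have "x j + 2 * x i * u j + x i * u j = x j + (x i * u j + x i * u j + x i * u j)" by (simp add: algebra_simps)
            then show ?thesis by (simp only: trip add_0_right)
          qed
          have "h (x i, w) = (\<lambda>j. x j + 2 * x i * u j + x i * u j)" unfolding h_def w_def by simp
          also have "\<dots> = x" using e by simp
          finally show ?thesis .
        qed
        ultimately show "x \<in> h ` (UNIV \<times> W)"
          apply (intro image_eqI[of x h "(x i, w)"])
          apply simp_all
          done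
      qed
    qed
  qed
  then have "card ((UNIV::3 set) \<times> W) = card V" by (rule bij_betw_same_card)
  then have cardV: "card V = 3 * card W" by (simp add: card_cartesian_product)

  have "card W \<noteq> 0"
  proof
    assume "card W = 0" then show False using cardV less.prems(4) by simp
  qed
  then have cW: "card W < card V" using cardV by simp
  have sumV: "(\<Sum>v\<in>V. \<Prod>j\<in>J. v j - a j) = (\<Sum>t\<in>(UNIV::3 set). \<Sum>w\<in>W. \<Prod>j\<in>J. (w j + t * u j) - a j)"
  proof -
    have "(\<Sum>v\<in>V. \<Prod>j\<in>J. v j - a j) = (\<Sum>p\<in>(UNIV::3 set) \<times> W. \<Prod>j\<in>J. h p j - a j)"
      using sum.reindex_bij_betw[OF bij, of "\<lambda>v. \<Prod>j\<in>J. v j - a j"] by simp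
    also have "\<dots> = (\<Sum>t\<in>(UNIV::3 set). \<Sum>w\<in>W. \<Prod>j\<in>J. h (t, w) j - a j)"
      using sum.cartesian_product[of "\<lambda>t w. \<Prod>j\<in>J. h (t,w) j - a j"] by simp
    finally show ?thesis unfolding h_def by simp
  qed
  have expand: "(\<Prod>j\<in>J. (w j + t * u j) - a j) = (\<Sum>S\<in>Pow J. t ^ card S * (\<Prod>j\<in>S. u j) * (\<Prod>j\<in>J - S. w j - a j))"
    for w t
  proof -
    have "(\<Prod>j\<in>J. (w j + t * u j) - a j) = (\<Prod>j\<in>J. t * u j + (w j - a j))"
      by (rule prod.cong) (auto simp: algebra_simps)
    also have "\<dots> = (\<Sum>S\<in>Pow J. (\<Prod>j\<in>S. t * u j) * (\<Prod>j\<in>J - S. w j - a j))"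
      by (rule prod_add[OF less.prems(3)])
    also have "\<dots> = (\<Sum>S\<in>Pow J. t ^ card S * (\<Prod>j\<in>S. u j) * (\<Prod>j\<in>J - S. w j - a j))"
      by (rule sum.cong) (auto simp: prod.distrib)
    finally show ?thesis .
  qed
  have "(\<Sum>t\<in>(UNIV::3 set). \<Sum>w\<in>W. \<Prod>j\<in>J. (w j + t * u j) - a j)
      = (\<Sum>S\<in>Pow J. (\<Prod>j\<in>S. u j) * (\<Sum>t\<in>(UNIV::3 set). t ^ card S) * (\<Sum>w\<in>W. \<Prod>j\<in>J - S. w j - a j))"
  proof -
    have "(\<Sum>t\<in>(UNIV::3 set). \<Sum>w\<in>W. \<Prod>j\<in>J. (w j + t * u j) - a j)
       = (\<Sum>t\<in>(UNIV::3 set). \<Sum>w\<in>W. \<Sum>S\<in>Pow J. t ^ card S * (\<Prod>j\<in>S. u j) * (\<Prod>j\<in>J - S. w j - a j))"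
      unfolding expand ..
    also have "\<dots> = (\<Sum>t\<in>(UNIV::3 set). \<Sum>S\<in>Pow J. \<Sum>w\<in>W. t ^ card S * (\<Prod>j\<in>S. u j) * (\<Prod>j\<in>J - S. w j - a j))"
      by (rule sum.cong[OF refl], rule sum.swap)
    also have "\<dots> = (\<Sum>S\<in>Pow J. \<Sum>t\<in>(UNIV::3 set). \<Sum>w\<in>W. t ^ card S * (\<Prod>j\<in>S. u j) * (\<Prod>j\<in>J - S. w j - a j))"
      by (rule sum.swap)
    also have "\<dots> = (\<Sum>S\<in>Pow J. (\<Prod>j\<in>S. u j) * (\<Sum>t\<in>(UNIV::3 set). t ^ card S) * (\<Sum>w\<in>W. \<Prod>j\<in>J - S. w j - a j))"
    proof (rule sum.cong[OF refl])
      fix S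
      have "(\<Sum>t\<in>(UNIV::3 set). \<Sum>w\<in>W. t ^ card S * (\<Prod>j\<in>S. u j) * (\<Prod>j\<in>J - S. w j - a j))
          = (\<Sum>t\<in>(UNIV::3 set). t ^ card S * (\<Prod>j\<in>S. u j) * (\<Sum>w\<in>W. (\<Prod>j\<in>J - S. w j - a j)))"
        by (simp only: sum_distrib_left)
      also have "\<dots> = (\<Sum>t\<in>(UNIV::3 set). t ^ card S) * ((\<Prod>j\<in>S. u j) * (\<Sum>w\<in>W. (\<Prod>j\<in>J - S. w j - a j)))"
        by (simp only: sum_distrib_right mult.assoc)
      finally show "(\<Sum>t\<in>(UNIV::3 set). \<Sum>w\<in>W. t ^ card S * (\<Prod>j\<in>S. u j) * (\<Prod>j\<in>J - S. w j - a j))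
          = (\<Prod>j\<in>S. u j) * (\<Sum>t\<in>(UNIV::3 set). t ^ card S) * (\<Sum>w\<in>W. \<Prod>j\<in>J - S. w j - a j)"
        by (simp add: ac_simps)
    qed
    finally show ?thesis .
  qed
  also have "\<dots> = 0"
  proof (rule sum.neutral, rule ballI)
    fix S assume S: "S \<in> Pow J"
    show "(\<Prod>j\<in>S. u j) * (\<Sum>t\<in>(UNIV::3 set). t ^ card S) * (\<Sum>w\<in>W. \<Prod>j\<in>J - S. w j - a j) = 0"
    proof (cases "card S \<le> 1")
      case True then show ?thesis using sum_t_pow by simp
    next
      case False
      have fS: "finite S" using S less.prems(3) finite_subset by auto
      have cJS: "card (J - S) = card J - card S" using S fS by (simp add: card_Diff_subset)
      have "card S \<le> card J" using S less.prems(3) card_mono by auto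
      then have "3 ^ card J = 3 ^ (card J - card S) * (3::nat) ^ card S"
        by (simp add: power_add[symmetric])
      moreover have "(9::nat) \<le> 3 ^ card S"
      proof -
        have "(3::nat) ^ 2 \<le> 3 ^ card S" using False by (intro power_increasing) auto
        then show ?thesis by simp
      qed
      ultimately have "(9::nat) * 3 ^ card (J - S) \<le> 3 ^ card J" using cJS by (simp add: mult.commute)
      also have "\<dots> < card V ^ 2" using less.prems(4) .
      also have "\<dots> = 9 * card W ^ 2" using cardV by (simp add: power2_eq_square)
      finally have lt: "3 ^ card (J - S) < card W ^ 2" by simp
      have "(\<Sum>w\<in>W. \<Prod>j\<in>J - S. w j - a j) = 0"
        using less.hyps[OF cW finW linW _ lt] less.prems(3) by simp
      then show ?thesis by simp
    qed
  qed
  finally show ?case using sumV by simp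
qed

definition wt :: "nat \<Rightarrow> (nat \<Rightarrow> 3) \<Rightarrow> nat" where
  "wt n x = card {i. i < n \<and> x i \<noteq> 0}"

lemma F3_space_Suc: "F3_space (Suc n) = (\<lambda>(x, a). x(n := a)) ` (F3_space n \<times> UNIV)"
proof
  show "F3_space (Suc n) \<subseteq> (\<lambda>(x, a). x(n := a)) ` (F3_space n \<times> UNIV)"
  proof
    fix y assume y: "y \<in> F3_space (Suc n)"
    have "y(n := 0) \<in> F3_space n" using y unfolding F3_space_def by auto
    moreover have "y = (y(n := 0))(n := y n)" by simp
    ultimately show "y \<in> (\<lambda>(x, a). x(n := a)) ` (F3_space n \<times> UNIV)"
      by (intro image_eqI[of y _ "(y(n := 0), y n)"]) auto
  qed
  show "(\<lambda>(x, a). x(n := a)) ` (F3_space n \<times> UNIV) \<subseteq> F3_space (Suc n)"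
    unfolding F3_space_def by auto
qed

lemma F3_space_inj: "inj_on (\<lambda>(x, a). x(n := a)) (F3_space n \<times> UNIV)"
proof (rule inj_onI)
  fix p q assume p: "p \<in> F3_space n \<times> UNIV" and q: "q \<in> F3_space n \<times> UNIV"
    and e: "(\<lambda>(x, a). x(n := a)) p = (\<lambda>(x, a). x(n := a)) q"
  obtain x a where pp: "p = (x, a)" by (cases p)
  obtain y b where qq: "q = (y, b)" by (cases q)
  have xn: "x n = 0" "y n = 0" using p q pp qq unfolding F3_space_def by auto
  have e2: "x(n := a) = y(n := b)" using e pp qq by simp
  then have "a = b" by (metis fun_upd_same)
  moreover have "x = y"
  proof
    fix i show "x i = y i"
    proof (cases "i = n")
      case True then show ?thesis using xn by simp
    next
      case False then show ?thesis using e2 by (metis fun_upd_other)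
    qed
  qed
  ultimately show "p = q" using pp qq by simp
qed

lemma finite_F3: "finite (F3_space n)"
proof (induction n)
  case 0
  have "F3_space 0 = {\<lambda>_. 0}" unfolding F3_space_def by auto
  then show ?case by simp
next
  case (Suc n)
  then show ?case unfolding F3_space_Suc by auto
qed

lemma card2_le: "card {a, b::3} \<le> 2" by (cases "a = b") auto

lemma tri3: "{0, p, q} = (UNIV::3 set) \<Longrightarrow> p \<noteq> 0 \<and> q \<noteq> 0 \<and> p \<noteq> q"
proof -
  assume a: "{0, p, q} = (UNIV::3 set)"
  have c3: "card {0, p, q} = 3" using a by simp
  show ?thesis
  proof (intro conjI notI)
    assume "p = 0" then have "{0, p, q} = {0, q}" by auto
    then show False using c3 card2_le[of 0 q] by simp
  next
    assume "q = 0" then have "{0, p, q} = {0, p}" by auto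
    then show False using c3 card2_le[of 0 p] by simp
  next
    assume "p = q" then have "{0, p, q} = {0, p}" by auto
    then show False using c3 card2_le[of 0 p] by simp
  qed
qed

lemma two_nz3: "p \<noteq> 0 \<Longrightarrow> q \<noteq> 0 \<Longrightarrow> p \<noteq> q \<Longrightarrow> (q::3) = p + p"
  using ex3[of p] ex3[of q] by auto

lemma mult_nz3: "(p::3) \<noteq> 0 \<Longrightarrow> q \<noteq> 0 \<Longrightarrow> p * q \<noteq> 0"
  using ex3[of p] ex3[of q] by auto

lemma prod_nz3: "finite A \<Longrightarrow> (\<forall>a\<in>A. f a \<noteq> (0::3)) \<Longrightarrow> prod f A \<noteq> 0"
  by (induction A rule: finite_induct) (auto simp: mult_nz3)

lemma weight_bound:
  assumes lc: "linear_code n C" and tr: "trifferent n C" and cC: "c \<in> C" and cnz: "c \<noteq> (\<lambda>_. 0)"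
  shows "card C ^ 2 \<le> 3 ^ (wt n c + 1)"
proof -
  have CF: "C \<subseteq> F3_space n" and C0: "(\<lambda>_. 0) \<in> C"
    and Cadd: "\<And>x y. x \<in> C \<Longrightarrow> y \<in> C \<Longrightarrow> (\<lambda>i. x i + y i) \<in> C"
    and Cmul: "\<And>a x. x \<in> C \<Longrightarrow> (\<lambda>i. a * x i) \<in> C"
    using lc unfolding linear_code_def by auto
  have finC: "finite C" using CF finite_F3 finite_subset by blast
  obtain i0 where i0: "c i0 \<noteq> 0" using cnz by auto
  have i0n: "i0 < n" proof (rule ccontr)
    assume "\<not> i0 < n" then have "c i0 = 0" using cC CF unfolding F3_space_def by auto
    then show False using i0 by simp
  qed
  define V0 where "V0 = {x\<in>C. x i0 = 0}"
  have finV: "finite V0" using finC V0_def by auto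
  have linV: "lin V0" unfolding lin_def V0_def using C0 Cadd Cmul by auto
  define J where "J = {i. i < n \<and> c i \<noteq> 0} - {i0}"
  have finJ: "finite J" unfolding J_def by auto
  have cardJ: "card J = wt n c - 1" unfolding J_def wt_def using i0 i0n by (simp add: card_Diff_singleton)
  have wt1: "wt n c \<ge> 1"
  proof -
    have "{i. i < n \<and> c i \<noteq> 0} \<noteq> {}" using i0 i0n by auto
    then show ?thesis unfolding wt_def by (simp add: Suc_leI card_gt_0_iff)
  qed
  have key: "\<exists>j\<in>J. x j - c j = 0" if xV: "x \<in> V0" and xnz: "x \<noteq> (\<lambda>_. 0)" for x
  proof -
    have xC: "x \<in> C" and xi0: "x i0 = 0" using xV V0_def by auto
    define y where "y = (\<lambda>i. x i + c i)"
    have yC: "y \<in> C" unfolding y_def using Cadd[OF xC cC] .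
    have d1: "(\<lambda>_. 0) \<noteq> c" using cnz by auto
    have d2: "c \<noteq> y"
    proof
      assume "c = y"
      then have "x = (\<lambda>_. 0)" unfolding y_def by (metis add_cancel_left_left)
      then show False using xnz by simp
    qed
    have d3: "(\<lambda>_. 0) \<noteq> y"
    proof
      assume "(\<lambda>_. 0) = y" then have "y i0 = 0" using fun_cong[of "\<lambda>_. 0" y i0] by simp
      then show False using xi0 i0 unfolding y_def by simp
    qed
    obtain i where i: "i < n" "{(\<lambda>_. 0::3) i, c i, y i} = UNIV"
      using tr C0 cC yC d1 d2 d3 unfolding trifferent_def by blast
    then have "{0, c i, y i} = (UNIV::3 set)" by simp
    from tri3[OF this] have "c i \<noteq> 0" "y i = c i + c i" using two_nz3 by auto
    then have ci: "c i \<noteq> 0" "x i = c i" unfolding y_def by auto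
    have "i \<noteq> i0" using ci xi0 by auto
    then have "i \<in> J" unfolding J_def using i ci by auto
    then show ?thesis using ci by auto
  qed
  define P where "P = (\<lambda>x::nat\<Rightarrow>3. \<Prod>j\<in>J. x j - c j)"
  have P0: "P (\<lambda>_. 0) \<noteq> 0"
    unfolding P_def by (rule prod_nz3[OF finJ]) (auto simp: J_def)
  have "(\<Sum>x\<in>V0. P x) = P (\<lambda>_. 0) + (\<Sum>x\<in>V0 - {\<lambda>_. 0}. P x)"
    using finV C0 V0_def by (simp add: sum.remove)
  also have "(\<Sum>x\<in>V0 - {\<lambda>_. 0}. P x) = 0"
    using key finJ unfolding P_def by (intro sum.neutral ballI prod_zero) auto
  finally have "(\<Sum>x\<in>V0. P x) \<noteq> 0" using P0 by simp
  then have ge: "card V0 ^ 2 \<le> 3 ^ card J"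
    using sum_prod_zero[OF finV linV finJ, of c] unfolding P_def by (meson not_le)
  define g where "g = (\<lambda>x::nat\<Rightarrow>3. (x i0, \<lambda>j. x j + (2 * (x i0 * c i0)) * c j))"
  have ci0: "c i0 * c i0 = 1" using sq3[OF i0] .
  have ginj: "inj_on g C"
  proof (rule inj_onI)
    fix x y assume "x \<in> C" "y \<in> C" and e: "g x = g y"
    have e1: "x i0 = y i0" using e unfolding g_def by simp
    have e2': "(\<lambda>j. x j + (2 * (x i0 * c i0)) * c j) = (\<lambda>j. y j + (2 * (y i0 * c i0)) * c j)"
      using arg_cong[OF e, of snd] unfolding g_def by simp
    show "x = y"
    proof
      fix j
      have "x j + (2 * (x i0 * c i0)) * c j = y j + (2 * (x i0 * c i0)) * c j"
        using fun_cong[OF e2', of j] e1 by simp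
      then show "x j = y j" by (rule add_right_imp_eq)
    qed
  qed
  have gimg: "g ` C \<subseteq> UNIV \<times> V0"
  proof
    fix p assume "p \<in> g ` C"
    then obtain x where xC: "x \<in> C" and p: "p = g x" by auto
    have "(\<lambda>j. x j + (2 * (x i0 * c i0)) * c j) \<in> C"
      using Cadd[OF xC Cmul[OF cC, of "2 * (x i0 * c i0)"]] by simp
    moreover have "x i0 + (2 * (x i0 * c i0)) * c i0 = 0"
    proof -
      have "x i0 + (2 * (x i0 * c i0)) * c i0 = x i0 + 2 * x i0 * (c i0 * c i0)" by (simp add: algebra_simps)
      also have "\<dots> = x i0 + x i0 + x i0" using ci0 by (simp add: algebra_simps)
      also have "\<dots> = 0" by (rule trip)
      finally show ?thesis .
    qed
    ultimately show "p \<in> UNIV \<times> V0" unfolding p g_def V0_def by simp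
  qed
  have "card C = card (g ` C)" using ginj by (simp add: card_image)
  also have "\<dots> \<le> card ((UNIV::3 set) \<times> V0)" using gimg finV by (intro card_mono) auto
  also have "\<dots> = 3 * card V0" by (simp add: card_cartesian_product)
  finally have "card C ^ 2 \<le> (3 * card V0) ^ 2" by (rule power_mono) simp
  also have "\<dots> = 9 * card V0 ^ 2" by (simp add: power_mult_distrib)
  also have "\<dots> \<le> 9 * 3 ^ card J" using ge by simp
  also have "\<dots> = 3 ^ (card J + 2)" by (simp add: power_add)
  also have "card J + 2 = wt n c + 1" using cardJ wt1 by simp
  finally show ?thesis .
qed

definition dot :: "nat \<Rightarrow> (nat \<Rightarrow> 3) \<Rightarrow> (nat \<Rightarrow> 3) \<Rightarrow> 3" where
  "dot n x y = (\<Sum>i<n. x i * y i)"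

definition om :: complex where "om = Complex (-1/2) (sqrt 3 / 2)"

definition ch :: "3 \<Rightarrow> complex" where
  "ch t = (if t = 0 then 1 else if t = 1 then om else cnj om)"

lemma om_sq: "om * om = cnj om"
  by (simp add: om_def complex_eq_iff field_simps power2_eq_square)

lemma om_cnj: "om * cnj om = 1"
  by (simp add: om_def complex_eq_iff field_simps power2_eq_square)

lemma cnj_om_sq: "cnj om * cnj om = om"
  by (simp add: om_def complex_eq_iff field_simps power2_eq_square)

lemma om_sum: "om + cnj om = -1"
  by (simp add: om_def complex_eq_iff)

lemma om_ne1: "om \<noteq> 1" "cnj om \<noteq> 1"
  by (simp_all add: om_def complex_eq_iff)

lemma num3: "(3::3) = 0" "(4::3) = 1" "(-1::3) = 2" "(-2::3) = 1" "(-4::3) = 2"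
  by simp_all

lemma ch0: "ch 0 = 1" by (simp add: ch_def)
lemma ch1: "ch 1 = om" by (simp add: ch_def)
lemma ch2: "ch 2 = cnj om" by (simp add: ch_def)

lemma ch_add: "ch (a + b) = ch a * ch b"
proof -
  have "a = 0 \<or> a = 1 \<or> a = 2" "b = 0 \<or> b = 1 \<or> b = 2" using ex3 by auto
  then show ?thesis
    by (elim disjE) (simp_all add: num3 ch0 ch1 ch2 om_sq om_cnj cnj_om_sq mult.commute)
qed

lemma ch_cnj: "cnj (ch a) = ch (- a)"
proof -
  have "a = 0 \<or> a = 1 \<or> a = 2" using ex3 by auto
  then show ?thesis by (elim disjE) (simp_all add: num3 ch0 ch1 ch2)
qed

lemma ch_ne1: "a \<noteq> 0 \<Longrightarrow> ch a \<noteq> 1"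
proof -
  assume "a \<noteq> 0"
  then have "a = 1 \<or> a = 2" using ex3 by auto
  then show ?thesis by (elim disjE) (simp_all add: ch1 ch2 om_ne1)
qed

lemma ch_pair: "ch (- t) + ch (- (2 * t)) = (if t = 0 then 2 else -1)"
proof -
  have "t = 0 \<or> t = 1 \<or> t = 2" using ex3 by auto
  then show ?thesis by (elim disjE) (simp_all add: num3 ch0 ch1 ch2 om_sum add.commute)
qed


definition Aop :: "nat \<Rightarrow> ((nat \<Rightarrow> 3) \<Rightarrow> real) \<Rightarrow> (nat \<Rightarrow> 3) \<Rightarrow> real" where
  "Aop n f x = (\<Sum>i<n. f (x(i := x i + 1)) + f (x(i := x i + 2)))"

definition fh :: "nat \<Rightarrow> ((nat \<Rightarrow> 3) \<Rightarrow> real) \<Rightarrow> (nat \<Rightarrow> 3) \<Rightarrow> complex" where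
  "fh n f y = (\<Sum>x\<in>F3_space n. of_real (f x) * ch (dot n x y))"

lemma dot_upd: "i < n \<Longrightarrow> dot n (x(i := v)) y = dot n x y + (v - x i) * y i"
proof -
  assume i: "i < n"
  have fin: "finite {..<n}" and iin: "i \<in> {..<n}" using i by auto
  have A: "dot n (x(i := v)) y = (x(i := v)) i * y i + (\<Sum>j\<in>{..<n} - {i}. (x(i := v)) j * y j)"
    unfolding dot_def by (rule sum.remove[OF fin iin])
  have B: "(\<Sum>j\<in>{..<n} - {i}. (x(i := v)) j * y j) = (\<Sum>j\<in>{..<n} - {i}. x j * y j)"
    by (rule sum.cong) auto
  have C: "dot n x y = x i * y i + (\<Sum>j\<in>{..<n} - {i}. x j * y j)"
    unfolding dot_def by (rule sum.remove[OF fin iin])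
  have D: "(x(i := v)) i = v" by simp
  show ?thesis unfolding A B C D by (simp add: algebra_simps)
qed

lemma shift_bij: "i < n \<Longrightarrow> bij_betw (\<lambda>x. x(i := x i + a)) (F3_space n) (F3_space n)"
proof (rule bij_betw_byWitness[where f' = "\<lambda>x. x(i := x i - a)"])
  assume i: "i < n"
  show "\<forall>x\<in>F3_space n. x(i := x i + a, i := (x(i := x i + a)) i - a) = x" by auto
  show "\<forall>x\<in>F3_space n. x(i := x i - a, i := (x(i := x i - a)) i + a) = x" by auto
  show "(\<lambda>x. x(i := x i + a)) ` F3_space n \<subseteq> F3_space n" using i unfolding F3_space_def by auto
  show "(\<lambda>x. x(i := x i - a)) ` F3_space n \<subseteq> F3_space n" using i unfolding F3_space_def by auto
qed

lemma fh_shift: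
  assumes i: "i < n"
  shows "(\<Sum>x\<in>F3_space n. of_real (f (x(i := x i + a))) * ch (dot n x y)) = ch (- (a * y i)) * fh n f y"
proof -
  define G where "G = (\<lambda>x. of_real (f x) * ch (dot n x y) * ch (- (a * y i)))"
  have "(\<Sum>x\<in>F3_space n. of_real (f (x(i := x i + a))) * ch (dot n x y)) = (\<Sum>x\<in>F3_space n. G (x(i := x i + a)))"
  proof (rule sum.cong[OF refl])
    fix x
    have "G (x(i := x i + a)) = of_real (f (x(i := x i + a))) * (ch (dot n x y + a * y i) * ch (- (a * y i)))"
      unfolding G_def dot_upd[OF i] by (simp add: mult.assoc)
    also have "ch (dot n x y + a * y i) * ch (- (a * y i)) = ch (dot n x y)"
      by (simp add: ch_add[symmetric])
    finally show "of_real (f (x(i := x i + a))) * ch (dot n x y) = G (x(i := x i + a))" by (rule sym)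
  qed
  also have "\<dots> = (\<Sum>x\<in>F3_space n. G x)"
    using sum.reindex_bij_betw[OF shift_bij[OF i, of a], of G] .
  also have "\<dots> = ch (- (a * y i)) * fh n f y"
    unfolding G_def fh_def by (simp add: sum_distrib_left mult.commute mult.left_commute)
  finally show ?thesis .
qed

lemma count_if: "(\<Sum>i<n. (if y i = 0 then 2 else -1) :: real) = 2 * real n - 3 * real (wt n y)"
proof -
  have fin: "finite {..<n}" by simp
  have "(\<Sum>i<n. (if y i = 0 then 2 else -1) :: real)
      = 2 * real (card ({..<n} \<inter> {i. y i = 0})) - real (card ({..<n} \<inter> - {i. y i = 0}))"
    using sum.If_cases[OF fin, of "\<lambda>i. y i = 0" "\<lambda>_. 2::real" "\<lambda>_. -1"] by simp
  moreover have "card ({..<n} \<inter> {i. y i = 0}) + card ({..<n} \<inter> - {i. y i = 0}) = n"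
  proof -
    have "card ({..<n} \<inter> {i. y i = 0}) + card ({..<n} \<inter> - {i. y i = 0})
        = card (({..<n} \<inter> {i. y i = 0}) \<union> ({..<n} \<inter> - {i. y i = 0}))"
      by (rule card_Un_disjoint[symmetric]) auto
    also have "({..<n} \<inter> {i. y i = 0}) \<union> ({..<n} \<inter> - {i. y i = 0}) = {..<n}" by auto
    finally show ?thesis by simp
  qed
  moreover have "{..<n} \<inter> - {i. y i = 0} = {i. i < n \<and> y i \<noteq> 0}" by auto
  ultimately show ?thesis unfolding wt_def by (simp add: algebra_simps)
qed

lemma Aop_fh:
  "(\<Sum>x\<in>F3_space n. of_real (Aop n f x) * ch (dot n x y)) = of_real (2 * real n - 3 * real (wt n y)) * fh n f y"
proof -
  have "(\<Sum>x\<in>F3_space n. of_real (Aop n f x) * ch (dot n x y))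
      = (\<Sum>x\<in>F3_space n. \<Sum>i<n. of_real (f (x(i := x i + 1))) * ch (dot n x y) + of_real (f (x(i := x i + 2))) * ch (dot n x y))"
    unfolding Aop_def by (simp add: sum_distrib_right distrib_right)
  also have "\<dots> = (\<Sum>i<n. \<Sum>x\<in>F3_space n. of_real (f (x(i := x i + 1))) * ch (dot n x y) + of_real (f (x(i := x i + 2))) * ch (dot n x y))"
    by (rule sum.swap)
  also have "\<dots> = (\<Sum>i<n. (ch (- (1 * y i)) + ch (- (2 * y i))) * fh n f y)"
    by (rule sum.cong[OF refl]) (simp add: sum.distrib fh_shift distrib_right)
  also have "\<dots> = (\<Sum>i<n. (if y i = 0 then 2 else -1)) * fh n f y"
    by (simp add: sum_distrib_right ch_pair)
  also have "(\<Sum>i<n. (if y i = 0 then 2 else -1)) = (of_real (\<Sum>i<n. (if y i = 0 then 2 else -1) :: real) :: complex)"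
    unfolding of_real_sum by (rule sum.cong) auto
  finally show ?thesis unfolding count_if .
qed


lemma dot_add2: "dot n u (\<lambda>i. y i + z i) = dot n u y + dot n u z"
  unfolding dot_def by (simp add: distrib_left sum.distrib)

lemma dot_sub1: "dot n (\<lambda>i. x i - x' i) y = dot n x y - dot n x' y"
  unfolding dot_def by (simp add: left_diff_distrib sum_subtractf)

lemma dot_zero1: "dot n x (\<lambda>_. 0) = 0"
  unfolding dot_def by simp

definition ort :: "nat \<Rightarrow> (nat \<Rightarrow> 3) set \<Rightarrow> (nat \<Rightarrow> 3) \<Rightarrow> bool" where
  "ort n C u \<longleftrightarrow> (\<forall>y\<in>C. dot n u y = 0)"

lemma char_sum:
  assumes lc: "linear_code n C" and finC: "finite C"
  shows "(\<Sum>y\<in>C. ch (dot n u y)) = (if ort n C u then of_nat (card C) else 0)"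
proof (cases "ort n C u")
  case True
  then have "(\<Sum>y\<in>C. ch (dot n u y)) = (\<Sum>y\<in>C. 1)" unfolding ort_def by (intro sum.cong) (auto simp: ch0)
  then show ?thesis using True by simp
next
  case False
  then obtain y0 where y0: "y0 \<in> C" "dot n u y0 \<noteq> 0" unfolding ort_def by auto
  have Cadd: "\<And>x y. x \<in> C \<Longrightarrow> y \<in> C \<Longrightarrow> (\<lambda>i. x i + y i) \<in> C"
    and Cmul: "\<And>a x. x \<in> C \<Longrightarrow> (\<lambda>i. a * x i) \<in> C"
    using lc unfolding linear_code_def by auto
  have bij: "bij_betw (\<lambda>y. (\<lambda>i. y i + y0 i)) C C"
  proof (rule bij_betw_byWitness[where f' = "\<lambda>y. (\<lambda>i. y i + 2 * y0 i)"])
    show "\<forall>a\<in>C. (\<lambda>i. a i + y0 i + 2 * y0 i) = a"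
    proof
      fix a show "(\<lambda>i. a i + y0 i + 2 * y0 i) = a"
      proof
        fix i have "a i + y0 i + 2 * y0 i = a i + (y0 i + y0 i + y0 i)" by (simp add: algebra_simps)
        then show "a i + y0 i + 2 * y0 i = a i" by (simp only: trip add_0_right)
      qed
    qed
    show "\<forall>a\<in>C. (\<lambda>i. a i + 2 * y0 i + y0 i) = a"
    proof
      fix a show "(\<lambda>i. a i + 2 * y0 i + y0 i) = a"
      proof
        fix i have "a i + 2 * y0 i + y0 i = a i + (y0 i + y0 i + y0 i)" by (simp add: algebra_simps)
        then show "a i + 2 * y0 i + y0 i = a i" by (simp only: trip add_0_right)
      qed
    qed
    show "(\<lambda>y i. y i + y0 i) ` C \<subseteq> C" using Cadd y0(1) by auto
    show "(\<lambda>y i. y i + 2 * y0 i) ` C \<subseteq> C" using Cadd Cmul y0(1) by auto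
  qed
  define S where "S = (\<Sum>y\<in>C. ch (dot n u y))"
  have "S = (\<Sum>y\<in>C. ch (dot n u (\<lambda>i. y i + y0 i)))"
    unfolding S_def using sum.reindex_bij_betw[OF bij, of "\<lambda>y. ch (dot n u y)"] by simp
  also have "\<dots> = (\<Sum>y\<in>C. ch (dot n u y) * ch (dot n u y0))"
    by (simp add: dot_add2 ch_add)
  also have "\<dots> = S * ch (dot n u y0)" unfolding S_def by (simp add: sum_distrib_right)
  finally have "S * (1 - ch (dot n u y0)) = 0" by (simp add: algebra_simps)
  moreover have "1 - ch (dot n u y0) \<noteq> 0" using ch_ne1[OF y0(2)] by simp
  ultimately have "S = 0" by simp
  then show ?thesis using False S_def by simp
qed

lemma quad:
  fixes g1 g2 :: "(nat \<Rightarrow> 3) \<Rightarrow> real"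
  shows "(\<Sum>y\<in>C. (\<Sum>x\<in>F3_space n. of_real (g1 x) * ch (dot n x y)) * cnj (\<Sum>x\<in>F3_space n. of_real (g2 x) * ch (dot n x y)))
    = (\<Sum>x\<in>F3_space n. \<Sum>x'\<in>F3_space n. of_real (g1 x * g2 x') * (\<Sum>y\<in>C. ch (dot n (\<lambda>i. x i - x' i) y)))"
proof -
  have t: "of_real (g1 x) * ch (dot n x y) * cnj (of_real (g2 x') * ch (dot n x' y))
        = of_real (g1 x * g2 x') * ch (dot n (\<lambda>i. x i - x' i) y)" for x x' y
  proof -
    have "ch (dot n x y) * ch (- dot n x' y) = ch (dot n (\<lambda>i. x i - x' i) y)"
      unfolding dot_sub1 by (simp add: ch_add[symmetric])
    then show ?thesis by (simp add: ch_cnj mult_ac)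
  qed
  have "(\<Sum>y\<in>C. (\<Sum>x\<in>F3_space n. of_real (g1 x) * ch (dot n x y)) * cnj (\<Sum>x\<in>F3_space n. of_real (g2 x) * ch (dot n x y)))
      = (\<Sum>y\<in>C. \<Sum>x\<in>F3_space n. \<Sum>x'\<in>F3_space n. of_real (g1 x) * ch (dot n x y) * cnj (of_real (g2 x') * ch (dot n x' y)))"
    unfolding cnj_sum by (simp add: sum_product)
  also have "\<dots> = (\<Sum>y\<in>C. \<Sum>x\<in>F3_space n. \<Sum>x'\<in>F3_space n. of_real (g1 x * g2 x') * ch (dot n (\<lambda>i. x i - x' i) y))"
    unfolding t ..
  also have "\<dots> = (\<Sum>x\<in>F3_space n. \<Sum>y\<in>C. \<Sum>x'\<in>F3_space n. of_real (g1 x * g2 x') * ch (dot n (\<lambda>i. x i - x' i) y))"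
    by (rule sum.swap)
  also have "\<dots> = (\<Sum>x\<in>F3_space n. \<Sum>x'\<in>F3_space n. \<Sum>y\<in>C. of_real (g1 x * g2 x') * ch (dot n (\<lambda>i. x i - x' i) y))"
    by (rule sum.cong[OF refl], rule sum.swap)
  also have "\<dots> = (\<Sum>x\<in>F3_space n. \<Sum>x'\<in>F3_space n. of_real (g1 x * g2 x') * (\<Sum>y\<in>C. ch (dot n (\<lambda>i. x i - x' i) y)))"
    by (simp add: sum_distrib_left)
  finally show ?thesis .
qed


lemma spectral:
  assumes lc: "linear_code n C"
    and dmin: "\<forall>y\<in>C. y \<noteq> (\<lambda>_. 0) \<longrightarrow> d \<le> real (wt n y)" and d0: "0 \<le> d"
    and fnn: "\<forall>x. 0 \<le> f x"
    and Af: "\<forall>x\<in>F3_space n. lam * f x \<le> Aop n f x"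
    and lam: "2 * real n - 3 * d \<le> lam"
  shows "(lam - 2 * real n + 3 * d) * real (card C) * (\<Sum>x\<in>F3_space n. (f x)^2) \<le> 3 * d * (\<Sum>x\<in>F3_space n. f x)^2"
proof -
  define F where "F = F3_space n"
  have finF: "finite F" unfolding F_def by (rule finite_F3)
  have CF: "C \<subseteq> F3_space n" and C0: "(\<lambda>_. 0) \<in> C" using lc unfolding linear_code_def by auto
  have finC: "finite C" using CF finite_F3 finite_subset by blast
  define Sr where "Sr = (\<lambda>u. if ort n C u then real (card C) else 0)"
  have Srnn: "0 \<le> Sr u" for u unfolding Sr_def by simp
  have cs: "(\<Sum>y\<in>C. ch (dot n u y)) = of_real (Sr u)" for u
    unfolding char_sum[OF lc finC] Sr_def by simp
  define m where "m = (\<lambda>y. (cmod (fh n f y))^2)"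
  define Q where "Q = (\<Sum>y\<in>C. m y)"
  define QA where "QA = (\<Sum>y\<in>C. (2 * real n - 3 * real (wt n y)) * m y)"
  have Qeq: "Q = (\<Sum>x\<in>F. \<Sum>x'\<in>F. f x * f x' * Sr (\<lambda>i. x i - x' i))"
  proof -
    have "(of_real Q :: complex) = (\<Sum>y\<in>C. fh n f y * cnj (fh n f y))"
      unfolding Q_def m_def of_real_sum complex_norm_square ..
    also have "\<dots> = (\<Sum>x\<in>F. \<Sum>x'\<in>F. of_real (f x * f x') * (\<Sum>y\<in>C. ch (dot n (\<lambda>i. x i - x' i) y)))"
      unfolding fh_def F_def by (rule quad)
    also have "\<dots> = of_real (\<Sum>x\<in>F. \<Sum>x'\<in>F. f x * f x' * Sr (\<lambda>i. x i - x' i))"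
      unfolding cs of_real_sum of_real_mult ..
    finally show ?thesis by (simp only: of_real_eq_iff)
  qed
  have QAeq: "QA = (\<Sum>x\<in>F. \<Sum>x'\<in>F. Aop n f x * f x' * Sr (\<lambda>i. x i - x' i))"
  proof -
    have "(of_real QA :: complex) = (\<Sum>y\<in>C. of_real (2 * real n - 3 * real (wt n y)) * fh n f y * cnj (fh n f y))"
      unfolding QA_def m_def of_real_sum of_real_mult complex_norm_square by (simp add: mult.assoc)
    also have "\<dots> = (\<Sum>y\<in>C. (\<Sum>x\<in>F3_space n. of_real (Aop n f x) * ch (dot n x y)) * cnj (\<Sum>x\<in>F3_space n. of_real (f x) * ch (dot n x y)))"
      unfolding Aop_fh fh_def ..
    also have "\<dots> = (\<Sum>x\<in>F. \<Sum>x'\<in>F. of_real (Aop n f x * f x') * (\<Sum>y\<in>C. ch (dot n (\<lambda>i. x i - x' i) y)))"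
      unfolding F_def by (rule quad)
    also have "\<dots> = of_real (\<Sum>x\<in>F. \<Sum>x'\<in>F. Aop n f x * f x' * Sr (\<lambda>i. x i - x' i))"
      unfolding cs of_real_sum of_real_mult ..
    finally show ?thesis by (simp only: of_real_eq_iff)
  qed
  have lower: "lam * Q \<le> QA"
  proof -
    have "lam * Q = (\<Sum>x\<in>F. \<Sum>x'\<in>F. (lam * f x) * (f x' * Sr (\<lambda>i. x i - x' i)))"
      unfolding Qeq by (simp add: sum_distrib_left mult_ac)
    also have "\<dots> \<le> (\<Sum>x\<in>F. \<Sum>x'\<in>F. Aop n f x * (f x' * Sr (\<lambda>i. x i - x' i)))"
    proof (rule sum_mono, rule sum_mono)
      fix x x' assume "x \<in> F" "x' \<in> F"
      then have "lam * f x \<le> Aop n f x" using Af F_def by auto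
      moreover have "0 \<le> f x' * Sr (\<lambda>i. x i - x' i)" using fnn Srnn by simp
      ultimately show "lam * f x * (f x' * Sr (\<lambda>i. x i - x' i)) \<le> Aop n f x * (f x' * Sr (\<lambda>i. x i - x' i))"
        by (rule mult_right_mono)
    qed
    also have "\<dots> = QA" unfolding QAeq by (simp add: mult_ac)
    finally show ?thesis .
  qed
  have wt0: "wt n (\<lambda>_. 0) = 0" unfolding wt_def by simp
  have fh0: "fh n f (\<lambda>_. 0) = of_real (\<Sum>x\<in>F. f x)"
    unfolding fh_def F_def dot_zero1 ch0 by (simp add: of_real_sum)
  have m0: "m (\<lambda>_. 0) = (\<Sum>x\<in>F. f x)^2"
  proof -
    have "0 \<le> (\<Sum>x\<in>F. f x)" using fnn by (simp add: sum_nonneg)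
    then show ?thesis unfolding m_def fh0 norm_of_real by simp
  qed
  have upper: "QA \<le> (2 * real n - 3 * d) * Q + 3 * d * (\<Sum>x\<in>F. f x)^2"
  proof -
    have "QA \<le> (\<Sum>y\<in>C. (2 * real n - 3 * d) * m y + (if y = (\<lambda>_. 0) then 3 * d * m y else 0))"
      unfolding QA_def
    proof (rule sum_mono)
      fix y assume yC: "y \<in> C"
      have mnn: "0 \<le> m y" unfolding m_def by simp
      show "(2 * real n - 3 * real (wt n y)) * m y \<le> (2 * real n - 3 * d) * m y + (if y = (\<lambda>_. 0) then 3 * d * m y else 0)"
      proof (cases "y = (\<lambda>_. 0)")
        case True then show ?thesis using wt0 by (simp add: algebra_simps)
      next
        case False
        then have "d \<le> real (wt n y)" using dmin yC by auto
        then have "(2 * real n - 3 * real (wt n y)) * m y \<le> (2 * real n - 3 * d) * m y"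
          using mnn by (intro mult_right_mono) auto
        then show ?thesis using False by simp
      qed
    qed
    also have "\<dots> = (2 * real n - 3 * d) * Q + 3 * d * m (\<lambda>_. 0)"
      unfolding Q_def using finC C0 by (simp add: sum.distrib sum_distrib_left sum.delta)
    finally show ?thesis unfolding m0 .
  qed
  have Qge: "real (card C) * (\<Sum>x\<in>F. (f x)^2) \<le> Q"
  proof -
    have Sr0: "Sr (\<lambda>i. x i - x i) = real (card C)" for x
      unfolding Sr_def ort_def dot_def by simp
    have "real (card C) * (\<Sum>x\<in>F. (f x)^2) = (\<Sum>x\<in>F. f x * f x * Sr (\<lambda>i. x i - x i))"
      unfolding Sr0 by (simp add: sum_distrib_left power2_eq_square mult_ac)
    also have "\<dots> \<le> (\<Sum>x\<in>F. \<Sum>x'\<in>F. f x * f x' * Sr (\<lambda>i. x i - x' i))"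
    proof (rule sum_mono)
      fix x assume xF: "x \<in> F"
      show "f x * f x * Sr (\<lambda>i. x i - x i) \<le> (\<Sum>x'\<in>F. f x * f x' * Sr (\<lambda>i. x i - x' i))"
        using member_le_sum[OF xF, of "\<lambda>x'. f x * f x' * Sr (\<lambda>i. x i - x' i)"] finF fnn Srnn
        by simp
    qed
    also have "\<dots> = Q" unfolding Qeq ..
    finally show ?thesis .
  qed
  have "(lam - 2 * real n + 3 * d) * Q \<le> 3 * d * (\<Sum>x\<in>F. f x)^2"
    using lower upper by (simp add: algebra_simps)
  moreover have "(lam - 2 * real n + 3 * d) * (real (card C) * (\<Sum>x\<in>F. (f x)^2)) \<le> (lam - 2 * real n + 3 * d) * Q"
    using Qge lam by (intro mult_left_mono) auto
  ultimately show ?thesis unfolding F_def by (simp add: mult.assoc)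
qed

lemma wt_set_upd: "{j. j < n \<and> (x(i := a)) j \<noteq> 0} =
   (if i < n \<and> a \<noteq> 0 then insert i {j. j < n \<and> x j \<noteq> 0} else {j. j < n \<and> x j \<noteq> 0} - {i})"
  by auto

lemma wt_upd_in: "i < n \<Longrightarrow> x i = 0 \<Longrightarrow> a \<noteq> 0 \<Longrightarrow> wt n (x(i := a)) = wt n x + 1"
  unfolding wt_def wt_set_upd by simp

lemma wt_upd_same: "i < n \<Longrightarrow> x i \<noteq> 0 \<Longrightarrow> a \<noteq> 0 \<Longrightarrow> wt n (x(i := a)) = wt n x"
proof -
  assume a: "i < n" "x i \<noteq> 0" "a \<noteq> 0"
  then have "insert i {j. j < n \<and> x j \<noteq> 0} = {j. j < n \<and> x j \<noteq> 0}" by auto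
  then show ?thesis unfolding wt_def wt_set_upd using a by simp
qed

lemma wt_upd_out: "i < n \<Longrightarrow> x i \<noteq> 0 \<Longrightarrow> wt n (x(i := 0)) = wt n x - 1"
  unfolding wt_def wt_set_upd by simp

lemma wt_le: "wt n x \<le> n"
proof -
  have "{i. i < n \<and> x i \<noteq> 0} \<subseteq> {..<n}" by auto
  then show ?thesis unfolding wt_def using card_mono[of "{..<n}"] by fastforce
qed

lemma count_if2: "(\<Sum>i<n. (if x i = 0 then p else q) :: real) = real (n - wt n x) * p + real (wt n x) * q"
proof -
  have fin: "finite {..<n}" by simp
  have "(\<Sum>i<n. (if x i = 0 then p else q) :: real)
      = real (card ({..<n} \<inter> {i. x i = 0})) * p + real (card ({..<n} \<inter> - {i. x i = 0})) * q"
    using sum.If_cases[OF fin, of "\<lambda>i. x i = 0" "\<lambda>_. p" "\<lambda>_. q"] by simp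
  moreover have "card ({..<n} \<inter> {i. x i = 0}) + card ({..<n} \<inter> - {i. x i = 0}) = n"
  proof -
    have "card ({..<n} \<inter> {i. x i = 0}) + card ({..<n} \<inter> - {i. x i = 0})
        = card (({..<n} \<inter> {i. x i = 0}) \<union> ({..<n} \<inter> - {i. x i = 0}))"
      by (rule card_Un_disjoint[symmetric]) auto
    also have "({..<n} \<inter> {i. x i = 0}) \<union> ({..<n} \<inter> - {i. x i = 0}) = {..<n}" by auto
    finally show ?thesis by simp
  qed
  moreover have "{..<n} \<inter> - {i. x i = 0} = {i. i < n \<and> x i \<noteq> 0}" by auto
  ultimately have e1: "card ({..<n} \<inter> {i. x i = 0}) = n - wt n x"
    and e2: "(\<Sum>i<n. (if x i = 0 then p else q) :: real)
      = real (card ({..<n} \<inter> {i. x i = 0})) * p + real (wt n x) * q" unfolding wt_def by auto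
  show ?thesis unfolding e2 e1 ..
qed

lemma Aop_radial:
  assumes xF: "x \<in> F3_space n"
  shows "Aop n (\<lambda>x. if x \<in> F3_space n then g (wt n x) else 0) x
       = real (n - wt n x) * (2 * g (wt n x + 1)) + real (wt n x) * (g (wt n x - 1) + g (wt n x))"
proof -
  let ?f = "\<lambda>x. if x \<in> F3_space n then g (wt n x) else 0"
  have inF: "i < n \<Longrightarrow> x(i := v) \<in> F3_space n" for i v using xF unfolding F3_space_def by auto
  have trm: "?f (x(i := x i + 1)) + ?f (x(i := x i + 2))
      = (if x i = 0 then 2 * g (wt n x + 1) else g (wt n x - 1) + g (wt n x))" if i: "i < n" for i
  proof -
    have c: "x i = 0 \<or> x i = 1 \<or> x i = 2" using ex3 by auto
    show ?thesis
    proof (cases "x i = 0")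
      case True
      then show ?thesis using inF[OF i] wt_upd_in[of i n x "x i + 1"] wt_upd_in[of i n x "x i + 2"] i by simp
    next
      case False
      then have "x i = 1 \<or> x i = 2" using c by auto
      then show ?thesis
      proof
        assume x1: "x i = 1"
        have "x i + 1 = 2" "x i + 2 = 0" using x1 by simp_all
        then show ?thesis using inF[OF i] wt_upd_same[of i n x 2] wt_upd_out[of i n x] i False
          by (simp add: add.commute num3)
      next
        assume x2: "x i = 2"
        have h1: "x i + 1 = 0" and h2: "x i + 2 = 1" using x2 by (simp_all add: num3)
        have "x(i := x i + 1) = x(i := 0)" "x(i := x i + 2) = x(i := 1)" by (simp_all only: h1 h2)
        then show ?thesis using inF[OF i] wt_upd_same[of i n x 1] wt_upd_out[of i n x] i False
          by simp
      qed
    qed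
  qed
  have "Aop n ?f x = (\<Sum>i<n. (if x i = 0 then 2 * g (wt n x + 1) else g (wt n x - 1) + g (wt n x)))"
    unfolding Aop_def by (rule sum.cong) (auto simp: trm)
  also have "\<dots> = real (n - wt n x) * (2 * g (wt n x + 1)) + real (wt n x) * (g (wt n x - 1) + g (wt n x))"
    by (rule count_if2)
  finally show ?thesis .
qed


definition phi :: "nat \<Rightarrow> nat \<Rightarrow> real \<Rightarrow> nat \<Rightarrow> real" where
  "phi r0 m \<beta> w = (if r0 \<le> w \<and> w \<le> r0 + m then \<beta> ^ (w - r0) * sin (pi * real (w - r0 + 1) / real (m + 2)) else 0)"

lemma phi_nn: "0 \<le> \<beta> \<Longrightarrow> 0 \<le> phi r0 m \<beta> w"
proof -
  assume b: "0 \<le> \<beta>"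
  show ?thesis
  proof (cases "r0 \<le> w \<and> w \<le> r0 + m")
    case True
    have "real (w - r0 + 1) \<le> real (m + 2)" using True by auto
    then have "real (w - r0 + 1) / real (m + 2) \<le> 1" by (simp add: divide_le_eq_1)
    then have "pi * (real (w - r0 + 1) / real (m + 2)) \<le> pi * 1"
      by (intro mult_left_mono) auto
    then have "0 \<le> sin (pi * real (w - r0 + 1) / real (m + 2))"
      by (intro sin_ge_zero) auto
    then show ?thesis unfolding phi_def using True b by simp
  next
    case False then show ?thesis unfolding phi_def if_not_P[OF False] by simp
  qed
qed

lemma sin_pair: "sin ((a::real) - h) + sin (a + h) = 2 * sin a * cos h"
  by (simp add: sin_add sin_diff)

lemma phi_eig:
  fixes n r0 m w :: nat
  assumes r0: "1 \<le> r0" and nm: "r0 + m < n" and wn: "w \<le> n"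
  defines "A \<equiv> 2 * real (n - r0 - m)"
  defines "\<gamma> \<equiv> sqrt (real r0 * A)"
  defines "\<beta> \<equiv> \<gamma> / A"
  defines "lam \<equiv> real r0 + 2 * \<gamma> * cos (pi / real (m + 2))"
  shows "lam * phi r0 m \<beta> w \<le> real (n - w) * (2 * phi r0 m \<beta> (w + 1)) + real w * (phi r0 m \<beta> (w - 1) + phi r0 m \<beta> w)"
proof -
  have A0: "0 < A" unfolding A_def using nm by simp
  have g0: "0 < \<gamma>" unfolding \<gamma>_def using A0 r0 by simp
  have b0: "0 < \<beta>" unfolding \<beta>_def using A0 g0 by simp
  have Ab: "A * \<beta> = \<gamma>" unfolding \<beta>_def using A0 by simp
  have gb: "\<gamma> * \<beta> = real r0"
  proof -
    have "\<gamma> * \<gamma> = real r0 * A" unfolding \<gamma>_def using A0 by simp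
    then show ?thesis unfolding \<beta>_def using A0 by (simp add: field_simps)
  qed
  define s where "s = (\<lambda>k::nat. sin (pi * real k / real (m + 2)))"
  have pnn: "0 \<le> phi r0 m \<beta> k" for k using phi_nn b0 by simp
  show ?thesis
  proof (cases "r0 \<le> w \<and> w \<le> r0 + m")
    case False
    then have "phi r0 m \<beta> w = 0" unfolding phi_def if_not_P[OF False] by simp
    moreover have "0 \<le> real (n - w) * (2 * phi r0 m \<beta> (w + 1)) + real w * (phi r0 m \<beta> (w - 1) + phi r0 m \<beta> w)"
      using pnn by simp
    ultimately show ?thesis by simp
  next
    case True
    define j where "j = w - r0"
    have wj: "w = r0 + j" and jm: "j \<le> m" unfolding j_def using True by auto
    have P0: "phi r0 m \<beta> w = \<beta> ^ j * s (j + 1)" unfolding phi_def s_def j_def using True by simp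
    have Pp: "phi r0 m \<beta> (w + 1) = \<beta> ^ (j + 1) * s (j + 2)"
    proof (cases "j < m")
      case True
      then show ?thesis unfolding phi_def s_def using wj by simp
    next
      case False
      then have jm': "j = m" using jm by simp
      have "s (j + 2) = 0" unfolding s_def jm' by simp
      moreover have "phi r0 m \<beta> (w + 1) = 0" unfolding phi_def using wj jm' by simp
      ultimately show ?thesis by simp
    qed
    have Pm: "\<beta> * phi r0 m \<beta> (w - 1) = \<beta> ^ j * s j"
    proof (cases "j = 0")
      case True
      have "s j = 0" unfolding s_def True by simp
      moreover have "\<not> (r0 \<le> w - 1 \<and> w - 1 \<le> r0 + m)" using wj True r0 by simp
      then have "phi r0 m \<beta> (w - 1) = 0" unfolding phi_def if_not_P[OF \<open>\<not> (r0 \<le> w - 1 \<and> w - 1 \<le> r0 + m)\<close>] by simp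
      ultimately show ?thesis by simp
    next
      case False
      then obtain k where k: "j = Suc k" by (cases j) auto
      have "phi r0 m \<beta> (w - 1) = \<beta> ^ k * s (k + 1)" unfolding phi_def s_def using wj k jm by simp
      then show ?thesis using k by simp
    qed
    have sp: "s j + s (j + 2) = 2 * s (j + 1) * cos (pi / real (m + 2))"
    proof -
      have M: "real (m + 2) > 0" by simp
      have e1: "pi * real (j + 1) / real (m + 2) - pi / real (m + 2) = pi * real j / real (m + 2)"
        using M by (simp add: diff_divide_distrib[symmetric] algebra_simps)
      have e2: "pi * real (j + 1) / real (m + 2) + pi / real (m + 2) = pi * real (j + 2) / real (m + 2)"
        using M by (simp add: add_divide_distrib[symmetric] algebra_simps)
      have "s j = sin (pi * real (j + 1) / real (m + 2) - pi / real (m + 2))"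
        unfolding s_def e1 ..
      moreover have "s (j + 2) = sin (pi * real (j + 1) / real (m + 2) + pi / real (m + 2))"
        unfolding s_def e2 ..
      ultimately show ?thesis unfolding s_def using sin_pair by simp
    qed
    have n1: "A / 2 \<le> real (n - w)" unfolding A_def using wj jm nm by simp
    have n2: "real r0 \<le> real w" using wj by simp
    have "lam * phi r0 m \<beta> w = \<beta> ^ j * (\<gamma> * (s j + s (j + 2)) + real r0 * s (j + 1))"
      unfolding lam_def P0 sp by (simp add: algebra_simps)
    also have "\<dots> = A * phi r0 m \<beta> (w + 1) + \<gamma> * (\<beta> * phi r0 m \<beta> (w - 1)) + real r0 * phi r0 m \<beta> w"
      unfolding Pp Pm P0 using Ab by (simp add: algebra_simps)
    also have "\<dots> = A * phi r0 m \<beta> (w + 1) + real r0 * (phi r0 m \<beta> (w - 1) + phi r0 m \<beta> w)"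
      using gb by (simp add: algebra_simps)
    also have "\<dots> \<le> real (n - w) * (2 * phi r0 m \<beta> (w + 1)) + real w * (phi r0 m \<beta> (w - 1) + phi r0 m \<beta> w)"
    proof (rule add_mono)
      show "A * phi r0 m \<beta> (w + 1) \<le> real (n - w) * (2 * phi r0 m \<beta> (w + 1))"
      proof -
        have "A * phi r0 m \<beta> (w + 1) \<le> (real (n - w) * 2) * phi r0 m \<beta> (w + 1)"
          using n1 pnn[of "w+1"] by (intro mult_right_mono) auto
        then show ?thesis by (simp add: mult_ac)
      qed
      show "real r0 * (phi r0 m \<beta> (w - 1) + phi r0 m \<beta> w) \<le> real w * (phi r0 m \<beta> (w - 1) + phi r0 m \<beta> w)"
        using n2 pnn[of "w-1"] pnn[of w] by (intro mult_right_mono) auto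
    qed
    finally show ?thesis .
  qed
qed


lemma F3_space_0: "F3_space 0 = {\<lambda>_. 0}" unfolding F3_space_def by auto

lemma wt_Suc_upd:
  assumes "x \<in> F3_space n"
  shows "wt (Suc n) (x(n := a)) = wt n x + (if a = 0 then 0 else 1)"
proof -
  have xn: "x n = 0" using assms unfolding F3_space_def by auto
  have "{i. i < Suc n \<and> (x(n := a)) i \<noteq> 0} = {i. i < n \<and> x i \<noteq> 0} \<union> (if a = 0 then {} else {n})"
    using xn by (auto simp: less_Suc_eq)
  moreover have "finite {i. i < n \<and> x i \<noteq> 0}" by simp
  ultimately show ?thesis unfolding wt_def by (cases "a = 0") auto
qed

lemma sum_z_wt: "(\<Sum>x\<in>F3_space n. (z::real) ^ wt n x) = (1 + 2 * z) ^ n"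
proof (induction n)
  case 0
  then show ?case unfolding F3_space_0 wt_def by simp
next
  case (Suc n)
  have "(\<Sum>x\<in>F3_space (Suc n). z ^ wt (Suc n) x)
      = (\<Sum>p\<in>F3_space n \<times> UNIV. z ^ wt (Suc n) ((\<lambda>(x, a). x(n := a)) p))"
    unfolding F3_space_Suc by (rule sum.reindex[OF F3_space_inj, unfolded comp_def])
  also have "\<dots> = (\<Sum>(x, a)\<in>F3_space n \<times> (UNIV::3 set). z ^ wt (Suc n) (x(n := a)))"
    by (rule sum.cong) (auto split: prod.split)
  also have "\<dots> = (\<Sum>x\<in>F3_space n. \<Sum>a\<in>(UNIV::3 set). z ^ wt (Suc n) (x(n := a)))"
    by (rule sum.cartesian_product[symmetric])
  also have "\<dots> = (\<Sum>x\<in>F3_space n. z ^ wt n x * (1 + 2 * z))"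
  proof (rule sum.cong[OF refl])
    fix x assume x: "x \<in> F3_space n"
    show "(\<Sum>a\<in>(UNIV::3 set). z ^ wt (Suc n) (x(n := a))) = z ^ wt n x * (1 + 2 * z)"
      unfolding sum3 wt_Suc_upd[OF x] by (simp add: algebra_simps)
  qed
  also have "\<dots> = (1 + 2 * z) ^ Suc n" using Suc by (simp add: sum_distrib_right[symmetric])
  finally show ?case .
qed

lemma ball_bound:
  assumes z0: "0 < z" and z1: "z \<le> (1::real)"
  shows "real (card {x\<in>F3_space n. wt n x \<le> R}) * z ^ R \<le> (1 + 2 * z) ^ n"
proof -
  let ?B = "{x\<in>F3_space n. wt n x \<le> R}"
  have finB: "finite ?B" using finite_F3 by simp
  have "real (card ?B) * z ^ R = (\<Sum>x\<in>?B. z ^ R)" by simp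
  also have "\<dots> \<le> (\<Sum>x\<in>?B. z ^ wt n x)"
    by (rule sum_mono) (auto intro!: power_decreasing simp: z0 z1 less_imp_le)
  also have "\<dots> \<le> (\<Sum>x\<in>F3_space n. z ^ wt n x)"
    by (rule sum_mono2[OF finite_F3]) (auto simp: z0 less_imp_le)
  also have "\<dots> = (1 + 2 * z) ^ n" by (rule sum_z_wt)
  finally show ?thesis .
qed

lemma cs_sum:
  assumes "finite B"
  shows "(\<Sum>x\<in>B. g x)^2 \<le> real (card B) * (\<Sum>x\<in>B. (g x)^2)"
proof -
  have "0 \<le> (\<Sum>x\<in>B. \<Sum>y\<in>B. (g x - g y)^2)" by (intro sum_nonneg) auto
  also have "(\<Sum>x\<in>B. \<Sum>y\<in>B. (g x - g y)^2) = (\<Sum>x\<in>B. \<Sum>y\<in>B. (g x)^2 + (g y)^2 - 2 * (g x * g y))"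
    by (intro sum.cong refl) (simp add: power2_eq_square algebra_simps)
  also have "\<dots> = (\<Sum>x\<in>B. real (card B) * (g x)^2 + (\<Sum>y\<in>B. (g y)^2) - 2 * g x * (\<Sum>y\<in>B. g y))"
    by (intro sum.cong refl) (simp add: sum_subtractf sum.distrib sum_distrib_left mult.assoc)
  also have "\<dots> = real (card B) * (\<Sum>x\<in>B. (g x)^2) + real (card B) * (\<Sum>y\<in>B. (g y)^2) - 2 * (\<Sum>x\<in>B. g x) * (\<Sum>y\<in>B. g y)"
    by (simp add: sum_subtractf sum.distrib sum_distrib_left[symmetric] sum_distrib_right[symmetric])
  also have "\<dots> = 2 * real (card B) * (\<Sum>x\<in>B. (g x)^2) - 2 * (\<Sum>x\<in>B. g x)^2"
    by (simp add: power2_eq_square)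
  finally show ?thesis by simp
qed


lemma main_bound:
  fixes n r0 m :: nat and d z :: real
  assumes lc: "linear_code n C" and r0: "1 \<le> r0" and nm: "r0 + m < n"
    and dmin: "\<forall>y\<in>C. y \<noteq> (\<lambda>_. 0) \<longrightarrow> d \<le> real (wt n y)" and d0: "0 \<le> d"
    and gap: "1 \<le> real r0 + 2 * sqrt (real r0 * (2 * real (n - r0 - m))) * cos (pi / real (m + 2)) - 2 * real n + 3 * d"
    and z0: "0 < z" and z1: "z \<le> 1"
  shows "real (card C) * z ^ (r0 + m) \<le> 3 * d * (1 + 2 * z) ^ n"
proof -
  define A where "A = 2 * real (n - r0 - m)"
  define \<gamma> where "\<gamma> = sqrt (real r0 * A)"
  define \<beta> where "\<beta> = \<gamma> / A"
  define lam where "lam = real r0 + 2 * \<gamma> * cos (pi / real (m + 2))"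
  have A0: "0 < A" unfolding A_def using nm by simp
  have b0: "0 \<le> \<beta>" unfolding \<beta>_def \<gamma>_def using A0 by simp
  define f where "f = (\<lambda>x. if x \<in> F3_space n then phi r0 m \<beta> (wt n x) else 0)"
  have fnn: "\<forall>x. 0 \<le> f x" unfolding f_def using phi_nn[OF b0] by simp
  have Af: "\<forall>x\<in>F3_space n. lam * f x \<le> Aop n f x"
  proof
    fix x assume xF: "x \<in> F3_space n"
    have "lam * f x = lam * phi r0 m \<beta> (wt n x)" unfolding f_def using xF by simp
    also have "\<dots> \<le> real (n - wt n x) * (2 * phi r0 m \<beta> (wt n x + 1)) + real (wt n x) * (phi r0 m \<beta> (wt n x - 1) + phi r0 m \<beta> (wt n x))"
      unfolding lam_def \<gamma>_def \<beta>_def A_def by (rule phi_eig[OF r0 nm wt_le])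
    also have "\<dots> = Aop n f x" unfolding f_def by (rule Aop_radial[OF xF, symmetric])
    finally show "lam * f x \<le> Aop n f x" .
  qed
  have gap': "1 \<le> lam - 2 * real n + 3 * d" using gap unfolding lam_def \<gamma>_def A_def .
  then have lam: "2 * real n - 3 * d \<le> lam" by simp
  have sp: "(lam - 2 * real n + 3 * d) * real (card C) * (\<Sum>x\<in>F3_space n. (f x)^2) \<le> 3 * d * (\<Sum>x\<in>F3_space n. f x)^2"
    by (rule spectral[OF lc dmin d0 fnn Af lam])
  define B where "B = {x\<in>F3_space n. wt n x \<le> r0 + m}"
  have finB: "finite B" unfolding B_def using finite_F3 by simp
  have BF: "B \<subseteq> F3_space n" unfolding B_def by auto
  have fout: "f x = 0" if "x \<in> F3_space n - B" for x
    using that unfolding f_def B_def phi_def by auto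
  have s1: "(\<Sum>x\<in>F3_space n. f x) = (\<Sum>x\<in>B. f x)"
    by (rule sum.mono_neutral_right[OF finite_F3 BF]) (simp add: fout)
  have s2: "(\<Sum>x\<in>F3_space n. (f x)^2) = (\<Sum>x\<in>B. (f x)^2)"
    by (rule sum.mono_neutral_right[OF finite_F3 BF]) (simp add: fout)
  define x0 where "x0 = (\<lambda>i::nat. if i < r0 then (1::3) else 0)"
  have x0F: "x0 \<in> F3_space n" unfolding x0_def F3_space_def using nm by auto
  have wx0: "wt n x0 = r0"
  proof -
    have "{i. i < n \<and> x0 i \<noteq> 0} = {..<r0}" unfolding x0_def using nm by auto
    then show ?thesis unfolding wt_def by simp
  qed
  have fx0: "0 < f x0"
  proof -
    have "0 < pi / real (m + 2)" by simp
    moreover have "pi / real (m + 2) < pi" by (simp add: divide_less_eq)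
    ultimately have "0 < sin (pi / real (m + 2))" by (intro sin_gt_zero) auto
    then show ?thesis unfolding f_def phi_def using x0F wx0 by simp
  qed
  have pos: "0 < (\<Sum>x\<in>F3_space n. (f x)^2)"
  proof -
    have "(f x0)^2 \<le> (\<Sum>x\<in>F3_space n. (f x)^2)"
      by (rule member_le_sum[OF x0F]) (auto simp: finite_F3)
    moreover have "0 < (f x0)^2" using fx0 by simp
    ultimately show ?thesis by linarith
  qed
  have "real (card C) * (\<Sum>x\<in>F3_space n. (f x)^2) \<le> (lam - 2 * real n + 3 * d) * real (card C) * (\<Sum>x\<in>F3_space n. (f x)^2)"
  proof (rule mult_right_mono)
    show "real (card C) \<le> (lam - 2 * real n + 3 * d) * real (card C)"
      using mult_right_mono[OF gap', of "real (card C)"] by simp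
  qed (use pos in simp)
  also have "\<dots> \<le> 3 * d * (\<Sum>x\<in>F3_space n. f x)^2" by (rule sp)
  also have "\<dots> \<le> 3 * d * (real (card B) * (\<Sum>x\<in>F3_space n. (f x)^2))"
    unfolding s1 s2 using cs_sum[OF finB, of f] d0 by (intro mult_left_mono) auto
  finally have "real (card C) * (\<Sum>x\<in>F3_space n. (f x)^2) \<le> (3 * d * real (card B)) * (\<Sum>x\<in>F3_space n. (f x)^2)"
    by (simp add: mult_ac)
  then have cC: "real (card C) \<le> 3 * d * real (card B)" using pos by simp
  have "real (card C) * z ^ (r0 + m) \<le> 3 * d * (real (card B) * z ^ (r0 + m))"
    using cC z0 by (simp add: mult_right_mono mult.assoc[symmetric])
  also have "\<dots> \<le> 3 * d * (1 + 2 * z) ^ n"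
    using ball_bound[OF z0 z1, of n "r0 + m"] d0 unfolding B_def by (intro mult_left_mono) auto
  finally show ?thesis .
qed

lemma kappa_pos: "0 < (20/91) * ln (3::real) - ln (19/18) - (209/4000) * ln 36"
proof -
  define a where "a = ln (4/3::real)"
  define b where "b = ln (9/8::real)"
  define c where "c = ln (19/18::real)"
  have l3: "ln (3::real) = 3 * a + 2 * b"
  proof -
    have e: "(4/3::real)^3 * (9/8)^2 = 3" by (simp add: power_divide)
    have "ln ((4/3::real)^3 * (9/8)^2) = ln ((4/3)^3) + ln ((9/8::real)^2)" by (simp only: ln_mult) simp
    then have "ln (3::real) = ln ((4/3)^3) + ln ((9/8::real)^2)" unfolding e .
    then show ?thesis unfolding a_def b_def by (simp add: ln_realpow)
  qed
  have l36: "ln (36::real) = 10 * a + 6 * b"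
  proof -
    have e: "(4/3::real)^10 * (9/8)^6 = 36" by (simp add: power_divide)
    have "ln ((4/3::real)^10 * (9/8)^6) = ln ((4/3)^10) + ln ((9/8::real)^6)" by (simp only: ln_mult) simp
    then have "ln (36::real) = ln ((4/3)^10) + ln ((9/8::real)^6)" unfolding e .
    then show ?thesis unfolding a_def b_def by (simp add: ln_realpow)
  qed
  have ha: "(\<Sum>i=0..<2*5. (- 1) ^ i * (1 / real (i + 1)) * (1/3::real) ^ (Suc i)) \<le> a"
    using ln_bounds(1)[of "1/3" 5] unfolding a_def by simp
  have hb: "(\<Sum>i=0..<2*3. (- 1) ^ i * (1 / real (i + 1)) * (1/8::real) ^ (Suc i)) \<le> b"
    using ln_bounds(1)[of "1/8" 3] unfolding b_def by simp
  have hc: "c \<le> (\<Sum>i=0..<2*2+1. (- 1) ^ i * (1 / real (i + 1)) * (1/18::real) ^ (Suc i))"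
    using ln_bounds(2)[of "1/18" 2] unfolding c_def by simp
  have ha': "(\<Sum>i=0..<2*5. (- 1) ^ i * (1 / real (i + 1)) * (1/3::real) ^ (Suc i)) = 2853869/9920232"
    by (simp add: eval_nat_numeral atLeast0LessThan lessThan_Suc)
  have hb': "(\<Sum>i=0..<2*3. (- 1) ^ i * (1 / real (i + 1)) * (1/8::real) ^ (Suc i)) = 308761/2621440"
    by (simp add: eval_nat_numeral atLeast0LessThan lessThan_Suc)
  have hc': "(\<Sum>i=0..<2*2+1. (- 1) ^ i * (1 / real (i + 1)) * (1/18::real) ^ (Suc i)) = 1021637/18895680"
    by (simp add: eval_nat_numeral atLeast0LessThan lessThan_Suc)
  have A: "2853869 / 9920232 \<le> a" using ha unfolding ha' .
  have B: "308761 / 2621440 \<le> b" using hb unfolding hb' .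
  have C: "c \<le> 1021637 / 18895680" using hc unfolding hc' .
  have eq: "20 / 91 * (3 * a + 2 * b) - c - 209 / 4000 * (10 * a + 6 * b) = (60/91 - 209/400) * a + (40/91 - 627/2000) * b - c"
    by (simp add: field_simps)
  have A2: "(60/91 - 209/400) * (2853869 / 9920232) \<le> (60/91 - 209/400) * a"
    by (rule mult_left_mono[OF A]) simp
  have B2: "(40/91 - 627/2000) * (308761 / 2621440) \<le> (40/91 - 627/2000) * b"
    by (rule mult_left_mono[OF B]) simp
  have num: "0 < (60/91 - 209/400) * (2853869 / 9920232) + (40/91 - 627/2000) * (308761 / 2621440) - (1021637 / 18895680::real)"
    by simp
  show ?thesis unfolding l3 l36 c_def[symmetric] eq using A2 B2 C num by linarith
qed

lemma cos_lower: "0 \<le> x \<Longrightarrow> x \<le> pi \<Longrightarrow> 1 - x^2 / 2 \<le> cos (x::real)"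
proof -
  assume x0: "0 \<le> x" and xp: "x \<le> pi"
  have c: "cos x = 1 - 2 * sin (x/2) ^ 2" using cos_double_sin[of "x/2"] by simp
  have s1: "sin (x/2) \<le> x/2" using sin_x_le_x[of "x/2"] x0 by simp
  have s0: "0 \<le> sin (x/2)" using x0 xp by (intro sin_ge_zero) auto
  have "sin (x/2) ^ 2 \<le> (x/2)^2" using s0 s1 by (intro power_mono) auto
  then show ?thesis unfolding c by (simp add: power_divide)
qed

lemma cos200: "4999/5000 \<le> cos (pi / 200)"
proof -
  have "1 - (pi/200)^2 / 2 \<le> cos (pi / 200)" by (rule cos_lower) auto
  moreover have "(pi/200)^2 \<le> (4/200)^2" using pi_less_4 by (intro power_mono) auto
  moreover have "(4/200::real)^2 = 1/2500" by (simp add: power2_eq_square)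
  ultimately show ?thesis by linarith
qed

lemma gap_ev:
  fixes n :: nat
  assumes n: "1000000 \<le> n"
  defines "r0 \<equiv> nat \<lceil>(209/4000) * real n\<rceil>"
  shows "1 \<le> r0" and "r0 + 198 < n"
    and "1 \<le> real r0 + 2 * sqrt (real r0 * (2 * real (n - r0 - 198))) * cos (pi / 200) - 2 * real n + 3 * (40 * real n / 91 - 1)"
proof -
  define t where "t = real n"
  have t: "1000000 \<le> t" unfolding t_def using n by simp
  have R1: "(209/4000) * t \<le> real r0" unfolding r0_def t_def by linarith
  have R2: "real r0 \<le> (209/4000) * t + 1" unfolding r0_def t_def by linarith
  show "1 \<le> r0" using R1 t by linarith
  show nr: "r0 + 198 < n" using R2 t unfolding t_def by linarith
  define R where "R = real r0"
  define M where "M = real (n - r0 - 198)"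
  have Meq: "M = t - R - 198" unfolding M_def R_def t_def using nr by simp
  define c where "c = cos (pi / 200)"
  have c0: "4999/5000 \<le> c" unfolding c_def by (rule cos200)
  define a :: real where "a = 62/91 - 209/4000"
  define W where "W = a * t + 4"
  have W0: "0 \<le> W" unfolding W_def a_def using t by simp
  have YW: "2 * real n - 3 * (40 * real n / 91 - 1) + 1 - R \<le> W"
    unfolding W_def a_def using R1 unfolding t_def R_def by simp
  have Rl: "(209/4000) * t \<le> R" using R1 R_def by simp
  have Ml: "(1 - 209/4000) * t - 199 \<le> M" using R2 Meq R_def by simp
  have Ml0: "0 \<le> (1 - 209/4000) * t - 199" using t by simp
  have prod1: "((209/4000) * t) * ((1 - 209/4000) * t - 199) \<le> R * M"
    using Rl Ml Ml0 t by (intro mult_mono) auto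
  have csq: "(4999/5000)^2 \<le> c^2" using c0 by (intro power_mono) auto
  have X: "(4999/5000)^2 * (8 * (((209/4000) * t) * ((1 - 209/4000) * t - 199))) \<le> c^2 * (8 * (R * M))"
  proof (rule mult_mono[OF csq])
    show "8 * ((209/4000) * t * ((1 - 209/4000) * t - 199)) \<le> 8 * (R * M)" using prod1 by simp
    show "0 \<le> c^2" by simp
    show "0 \<le> 8 * ((209/4000) * t * ((1 - 209/4000) * t - 199))" using Ml0 t by simp
  qed
  have t2: "1000000 * t \<le> t * t" using t by (intro mult_right_mono) auto
  have poly: "W^2 \<le> (4999/5000)^2 * (8 * (((209/4000) * t) * ((1 - 209/4000) * t - 199)))"
  proof -
    define P where "P = t * t"
    have e1: "W^2 = 52432298361/132496000000 * P + 228981/45500 * t + 16"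
      unfolding W_def a_def P_def by (simp add: power2_eq_square algebra_simps)
    have e2: "(4999/5000)^2 * (8 * (((209/4000) * t) * ((1 - 209/4000) * t - 199)))
        = 19800052602319/50000000000000 * P - 1039359131591/12500000000 * t"
      unfolding P_def by (simp add: power2_eq_square algebra_simps)
    have p1: "1000000 * t \<le> P" unfolding P_def using t by (intro mult_right_mono) auto
    have "(1/5000) * (1000000 * t) \<le> (1/5000) * P" using p1 by simp
    then show ?thesis unfolding e1 e2 using t by simp
  qed
  have "W \<le> sqrt (c^2 * (8 * (R * M)))"
    by (rule real_le_rsqrt) (use poly X in linarith)
  also have "sqrt (c^2 * (8 * (R * M))) = 2 * c * sqrt (R * (2 * M))"
  proof -
    have cpos: "0 \<le> c" using c0 by simp
    have "c^2 * (8 * (R * M)) = (2 * c)^2 * (R * (2 * M))" by (simp add: power2_eq_square algebra_simps)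
    then have "sqrt (c^2 * (8 * (R * M))) = sqrt ((2 * c)^2) * sqrt (R * (2 * M))"
      by (simp only: real_sqrt_mult)
    also have "sqrt ((2 * c)^2) = 2 * c" using cpos by (simp only: real_sqrt_abs)
    finally show ?thesis .
  qed
  finally have "W \<le> 2 * c * sqrt (R * (2 * M))" .
  then show "1 \<le> real r0 + 2 * sqrt (real r0 * (2 * real (n - r0 - 198))) * cos (pi / 200) - 2 * real n + 3 * (40 * real n / 91 - 1)"
    using YW unfolding R_def M_def c_def by (simp add: algebra_simps)
qed


lemma growth:
  "eventually (\<lambda>n. ln (real n) + (ln 3 + 199 * ln 36) < real n * ((20/91) * ln (3::real) - ln (19/18) - (209/4000) * ln 36)) sequentially"
proof -
  define \<kappa> where "\<kappa> = (20/91) * ln (3::real) - ln (19/18) - (209/4000) * ln 36"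
  define K where "K = ln 3 + 199 * ln (36::real)"
  have k0: "0 < \<kappa>" unfolding \<kappa>_def by (rule kappa_pos)
  have q1: "1 < norm (exp \<kappa>)" using k0 by simp
  have lim: "(\<lambda>n. of_nat n / (exp \<kappa>)^n) \<longlonglongrightarrow> (0::real)" by (rule lim_n_over_pown[OF q1])
  have "eventually (\<lambda>n. real n / (exp \<kappa>)^n < exp (- K)) sequentially"
    using order_tendstoD(2)[OF lim, of "exp (- K)"] by simp
  moreover have "eventually (\<lambda>n. 1 \<le> n) sequentially" by (rule eventually_ge_at_top)
  ultimately have "eventually (\<lambda>n. ln (real n) + K < real n * \<kappa>) sequentially"
  proof (rule eventually_mono[OF eventually_conj])
    fix n :: nat assume a: "real n / (exp \<kappa>)^n < exp (- K) \<and> 1 \<le> n"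
    have pos: "0 < (exp \<kappa>)^n" by simp
    have "real n < exp (- K) * (exp \<kappa>)^n" using a pos by (simp add: divide_less_eq)
    also have "\<dots> = exp (real n * \<kappa> - K)" by (simp add: exp_of_nat_mult[symmetric] exp_add[symmetric])
    finally have "ln (real n) < real n * \<kappa> - K" using a by (simp add: ln_less_cancel_iff[symmetric])
    then show "ln (real n) + K < real n * \<kappa>" by simp
  qed
  then show ?thesis unfolding \<kappa>_def K_def .
qed

theorem theorem1p5:
  shows "\<exists>N::nat. \<forall>n\<ge>N. \<forall>C. linear_code n C \<and> trifferent n C \<longrightarrow>
           real (card C) \<le> 3 powr (real n / 4.55)"
proof -
  define \<kappa> where "\<kappa> = (20/91) * ln (3::real) - ln (19/18) - (209/4000) * ln 36"
  obtain N1 where N1: "\<And>n. N1 \<le> n \<Longrightarrow> ln (real n) + (ln 3 + 199 * ln 36) < real n * \<kappa>"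
    using growth unfolding \<kappa>_def eventually_sequentially by blast
  show ?thesis
  proof (intro exI allI impI)
    fix n :: nat and C :: "(nat \<Rightarrow> 3) set"
    assume nN: "max N1 1000000 \<le> n" and lt: "linear_code n C \<and> trifferent n C"
    have lc: "linear_code n C" and tr: "trifferent n C" using lt by auto
    have n6: "1000000 \<le> n" and nN1: "N1 \<le> n" using nN by auto
    define t where "t = real n"
    have t6: "1000000 \<le> t" unfolding t_def using n6 by simp
    define T where "T = 3 powr (20 * t / 91)"
    have Teq: "3 powr (real n / 4.55) = T" unfolding T_def t_def by (simp add: mult.commute)
    show "real (card C) \<le> 3 powr (real n / 4.55)"
    proof (rule ccontr)
      assume "\<not> real (card C) \<le> 3 powr (real n / 4.55)"
      then have big: "T < real (card C)" unfolding Teq by simp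
      have T0: "0 < T" unfolding T_def by simp
      define d where "d = 40 * t / 91 - 1"
      have dmin: "\<forall>y\<in>C. y \<noteq> (\<lambda>_. 0) \<longrightarrow> d \<le> real (wt n y)"
      proof (intro ballI impI)
        fix y assume yC: "y \<in> C" and ynz: "y \<noteq> (\<lambda>_. 0)"
        have wb: "card C ^ 2 \<le> 3 ^ (wt n y + 1)" by (rule weight_bound[OF lc tr yC ynz])
        have "T * T < real (card C) * real (card C)" using big T0 by (intro mult_strict_mono) auto
        also have "\<dots> = real (card C ^ 2)" by (simp add: power2_eq_square)
        also have "\<dots> \<le> real ((3::nat) ^ (wt n y + 1))" using wb by (simp only: of_nat_le_iff)
        also have "\<dots> = (3::real) ^ (wt n y + 1)" by simp
        also have "\<dots> = 3 powr real (wt n y + 1)" by (rule powr_realpow[symmetric]) simp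
        finally have A: "T * T < 3 powr real (wt n y + 1)" .
        have B: "T * T = 3 powr (20 * t / 91 + 20 * t / 91)" unfolding T_def by (simp only: powr_add)
        have "3 powr (20 * t / 91 + 20 * t / 91) < 3 powr real (wt n y + 1)" using A B by metis
        then have "20 * t / 91 + 20 * t / 91 < real (wt n y + 1)"
          using powr_less_cancel_iff[of 3 "20 * t / 91 + 20 * t / 91" "real (wt n y + 1)"] by simp
        then show "d \<le> real (wt n y)" unfolding d_def by simp
      qed
      have d0: "0 \<le> d" unfolding d_def using t6 by simp
      have dpos: "0 < d" unfolding d_def using t6 by simp
      define r0 where "r0 = nat \<lceil>(209/4000) * real n\<rceil>"
      have r01: "1 \<le> r0" and nm: "r0 + 198 < n"
        and gap: "1 \<le> real r0 + 2 * sqrt (real r0 * (2 * real (n - r0 - 198))) * cos (pi / 200) - 2 * real n + 3 * (40 * real n / 91 - 1)"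
        using gap_ev[OF n6] unfolding r0_def by auto
      have gap': "1 \<le> real r0 + 2 * sqrt (real r0 * (2 * real (n - r0 - 198))) * cos (pi / real (198 + 2)) - 2 * real n + 3 * d"
        using gap unfolding d_def t_def by simp
      have mb: "real (card C) * (1/36) ^ (r0 + 198) \<le> 3 * d * (1 + 2 * (1/36)) ^ n"
        by (rule main_bound[OF lc r01 nm dmin d0 gap']) auto
      define P where "P = 3 * d * (19/18) ^ n * 36 ^ (r0 + 198)"
      have cP: "real (card C) \<le> P"
      proof -
        have "real (card C) = real (card C) * (1/36) ^ (r0 + 198) * 36 ^ (r0 + 198)"
          by (simp add: power_one_over)
        also have "\<dots> \<le> 3 * d * (1 + 2 * (1/36)) ^ n * 36 ^ (r0 + 198)"
          using mb by (intro mult_right_mono) auto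
        also have "\<dots> = P" unfolding P_def by simp
        finally show ?thesis .
      qed
      have R2: "real r0 \<le> (209/4000) * t + 1" unfolding r0_def t_def by linarith
      have lnP: "ln P = ln 3 + ln d + real n * ln (19/18) + real (r0 + 198) * ln 36"
        unfolding P_def using dpos by (simp add: ln_mult ln_realpow)
      have "ln d \<le> ln t" using dpos unfolding d_def by (subst ln_le_cancel_iff) auto
      moreover have "real (r0 + 198) * ln 36 \<le> ((209/4000) * t + 199) * ln (36::real)"
        using R2 by (intro mult_right_mono) auto
      moreover have "ln t + (ln 3 + 199 * ln 36) < t * \<kappa>" using N1[OF nN1] unfolding t_def .
      ultimately have "ln P < (20 * t / 91) * ln 3"
        unfolding lnP \<kappa>_def t_def by (simp add: algebra_simps)
      also have "\<dots> = ln T" unfolding T_def by simp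
      finally have "P < T" using T0 dpos unfolding P_def by (subst ln_less_cancel_iff[symmetric]) auto
      then show False using cP big by simp
    qed
  qed
qed

end
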